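(* Let ${\bf p}=({\bf p}_1,\dots,{\bf p}_n)$ and ${\bf q}=({\bf q}_1,\dots,{\bf q}_m)$ be configurations in some Euclidean space $\mathbb R^k$ and suppose there are strictly positive numbers $\lambda_1,\dots,\lambda_n,\mu_1,\dots,\mu_m$ with $$\sum_{i=1}^n\lambda_i\hat{\bf p}_i\hat{\bf p}_i^t=\sum_{j=1}^m\mu_j\hat{\bf q}_j\hat{\bf q}_j^t .$$ Then the framework $(K(n,m),{\bf p},{\bf q})$ is super stable, hence universally rigid, and the affine span of ${\bf p}$ equals the affine span of ${\bf q}$.
   Context: For ${\bf x}\in\mathbb R^k$, $\hat{\bf x}$ is ${\bf x}$ with a $1$ appended as last coordinate. $(K(n,m),{\bf p},{\bf q})$ is the framework with bars joining ${\bf p}_i$ to ${\bf q}_j$ for all $i,j$, $N=n+m$ vertices. An equilibrium stress assigns scalars $\omega_{ij}=\omega_{ji}$ to edges ($0$ on non-edges) with $\sum_i\omega_{ij}({\bf p}_i-{\bf p}_j)=0$ at every vertex $j$; its stress matrix has off-diagonal entries $-\omega_{ij}$ and zero row sums. Nonzero vectors in $\mathbb R^d$ lie on a conic at infinity if some nonzero symmetric $d\times d$ matrix $Q$ satisfies ${\bf v}^tQ{\bf v}=0$ for all of them. A framework with $N$ vertices whose affine span has dimension $d$ is super stable if, after placing it rigidly in $\mathbb R^d$ (its affine span), it has an equilibrium stress with positive semidefinite stress matrix of rank $N-d-1$ and its edge vectors do not lie on a conic at infinity of $\mathbb R^d$. A framework is universally rigid if every configuration in any $\mathbb R^D$ with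 the same edge lengths has all pairwise distances equal to those of the original. *)

theory Defs
  imports "HOL-Analysis.Analysis"
begin

(* hat x : x with a 1 appended as last coordinate (extra coordinate indexed by Inr ()) *)
definition hat :: "real^'k \<Rightarrow> real^('k + unit)" where
  "hat x = (\<chi> i. case i of Inl j \<Rightarrow> x $ j | Inr _ \<Rightarrow> 1)"

(* outer product u u^t *)
definition outer :: "real^'a \<Rightarrow> real^'a^'a" where
  "outer u = (\<chi> a b. u $ a * u $ b)"

(* edge relation of the complete bipartite graph K(n,m) on vertex type 'n + 'm *)
definition Kbip :: "('n + 'm) \<Rightarrow> ('n + 'm) \<Rightarrow> bool" where
  "Kbip u v = ((\<exists>i j. u = Inl i \<and> v = Inr j) \<or> (\<exists>i j. u = Inr j \<and> v = Inl i))"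

(* configuration of (K(n,m),p,q) *)
definition bip_config :: "('n \<Rightarrow> 'x) \<Rightarrow> ('m \<Rightarrow> 'x) \<Rightarrow> ('n + 'm) \<Rightarrow> 'x" where
  "bip_config p q = case_sum p q"

(* equilibrium stress of framework (E, P); E a symmetric irreflexive edge relation *)
definition equilibrium_stress ::
  "('v::finite \<Rightarrow> 'v \<Rightarrow> bool) \<Rightarrow> ('v \<Rightarrow> real^'k) \<Rightarrow> ('v \<Rightarrow> 'v \<Rightarrow> real) \<Rightarrow> bool" where
  "equilibrium_stress E P \<omega> \<longleftrightarrow>
     (\<forall>i j. \<omega> i j = \<omega> j i) \<and>
     (\<forall>i j. \<not> E i j \<longrightarrow> \<omega> i j = 0) \<and>
     (\<forall>j. (\<Sum>i\<in>UNIV. \<omega> i j *\<^sub>R (P i - P j)) = 0)"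

(* stress matrix: off-diagonal entries -omega_ij, zero row sums *)
definition stress_matrix :: "('v::finite \<Rightarrow> 'v \<Rightarrow> real) \<Rightarrow> real^'v^'v" where
  "stress_matrix \<omega> = (\<chi> i j. if i = j then (\<Sum>l\<in>UNIV - {i}. \<omega> i l) else - \<omega> i j)"

definition psd :: "real^'n^'n \<Rightarrow> bool" where
  "psd A \<longleftrightarrow> (\<forall>x. 0 \<le> x \<bullet> (A *v x))"

definition edge_vectors :: "('v \<Rightarrow> 'v \<Rightarrow> bool) \<Rightarrow> ('v \<Rightarrow> real^'k) \<Rightarrow> (real^'k) set" where
  "edge_vectors E P = {P u - P v | u v. E u v}"

(* linear subspace parallel to the affine span of the configuration *)
definition direction_space :: "('v \<Rightarrow> real^'k) \<Rightarrow> (real^'k) set" where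
  "direction_space P = span {P u - P v | u v. True}"

(* The vectors S (contained in the subspace L, identified isometrically with R^d)
   lie on a conic at infinity of L: some nonzero symmetric bilinear form on L
   vanishes on all of them. A symmetric bilinear form on L is the restriction of
   a symmetric k x k matrix Q; it is nonzero on L iff x^t Q y <> 0 for some x,y in L. *)
definition on_conic_at_infinity_in :: "(real^'k) set \<Rightarrow> (real^'k) set \<Rightarrow> bool" where
  "on_conic_at_infinity_in L S \<longleftrightarrow>
     (\<exists>Q :: real^'k^'k. transpose Q = Q \<and>
        (\<exists>x\<in>L. \<exists>y\<in>L. x \<bullet> (Q *v y) \<noteq> 0) \<and>
        (\<forall>v\<in>S. v \<bullet> (Q *v v) = 0))"

definition super_stable :: "('v::finite \<Rightarrow> 'v \<Rightarrow> bool) \<Rightarrow> ('v \<Rightarrow> real^'k) \<Rightarrow> bool" where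
  "super_stable E P \<longleftrightarrow>
     (\<exists>\<omega>. equilibrium_stress E P \<omega> \<and> psd (stress_matrix \<omega>) \<and>
        int (rank (stress_matrix \<omega>)) = int CARD('v) - aff_dim (range P) - 1) \<and>
     \<not> on_conic_at_infinity_in (direction_space P) (edge_vectors E P)"

(* squared Euclidean distance in R^D, points of R^D represented as nat => real
   (only coordinates < D matter) *)
definition sqdist_D :: "nat \<Rightarrow> (nat \<Rightarrow> real) \<Rightarrow> (nat \<Rightarrow> real) \<Rightarrow> real" where
  "sqdist_D D x y = (\<Sum>i<D. (x i - y i)^2)"

definition universally_rigid :: "('v \<Rightarrow> 'v \<Rightarrow> bool) \<Rightarrow> ('v \<Rightarrow> real^'k) \<Rightarrow> bool" where
  "universally_rigid E P \<longleftrightarrow>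
     (\<forall>(D::nat) (P' :: 'v \<Rightarrow> nat \<Rightarrow> real).
        (\<forall>u v. E u v \<longrightarrow> sqdist_D D (P' u) (P' v) = (dist (P u) (P v))^2) \<longrightarrow>
        (\<forall>u v. sqdist_D D (P' u) (P' v) = (dist (P u) (P v))^2))"

end

theory Submission
  imports Defs
begin



lemma sum_UNIV_plus:
  "(\<Sum>v\<in>(UNIV::('a::finite+'b::finite) set). f v) = (\<Sum>i\<in>UNIV. f (Inl i)) + (\<Sum>j\<in>UNIV. f (Inr j))"
  by (subst UNIV_Plus_UNIV[symmetric], subst sum.Plus) auto

lemma outer_mv: "outer u *v z = (u \<bullet> z) *\<^sub>R u"
  by (simp add: vec_eq_iff outer_def matrix_vector_mult_def inner_vec_def sum_distrib_left mult_ac)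

lemma sum_outer_mv:
  fixes u :: "'j \<Rightarrow> real^'a"
  shows "(\<Sum>j\<in>A. c j *\<^sub>R outer (u j)) *v z = (\<Sum>j\<in>A. (c j * (u j \<bullet> z)) *\<^sub>R u j)"
proof -
  have "(\<Sum>j\<in>A. c j *\<^sub>R outer (u j)) *v z = (\<Sum>j\<in>A. c j *\<^sub>R (outer (u j) *v z))"
    by (simp add: vec_eq_iff matrix_vector_mult_def sum_component sum_distrib_left sum_distrib_right
        sum.swap[of _ A] mult_ac)
  then show ?thesis by (simp add: outer_mv)
qed

lemma in_range_gram:
  fixes M :: "real^'a^'a" and u :: "'j::finite \<Rightarrow> real^'a"
  assumes c: "\<forall>j. c j > 0" and M: "\<forall>z. M *v z = (\<Sum>j\<in>UNIV. (c j * (u j \<bullet> z)) *\<^sub>R u j)"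
  shows "u j \<in> range ((*v) M)"
proof -
  let ?R = "range ((*v) M)"
  have sub: "subspace ?R"
    using linear_subspace_image[OF matrix_vector_mul_linear subspace_UNIV] by simp
  then have spanR: "span ?R = ?R" by (simp add: span_eq_iff)
  obtain y z where y: "y \<in> span ?R" and z: "\<And>w. w \<in> span ?R \<Longrightarrow> orthogonal z w" and yz: "u j = y + z"
    using orthogonal_subspace_decomp_exists by blast
  have "z \<bullet> (M *v z) = 0" using z[of "M *v z"] spanR by (auto simp: orthogonal_def)
  moreover have "z \<bullet> (M *v z) = (\<Sum>l\<in>UNIV. c l * (u l \<bullet> z)^2)"
    using M by (simp add: inner_sum_right power2_eq_square mult_ac inner_commute)
  ultimately have "(\<Sum>l\<in>UNIV. c l * (u l \<bullet> z)^2) = 0" by simp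
  moreover have "\<forall>x\<in>UNIV. 0 \<le> c x * (u x \<bullet> z)\<^sup>2" using c by (simp add: less_imp_le)
  ultimately have "\<forall>l\<in>UNIV. c l * (u l \<bullet> z)^2 = 0"
    using sum_nonneg_eq_0_iff[of UNIV "\<lambda>l. c l * (u l \<bullet> z)^2"] by simp
  then have "u j \<bullet> z = 0" using c by (metis UNIV_I mult_eq_0_iff order_less_irrefl power_eq_0_iff)
  moreover have "y \<bullet> z = 0" using z[OF y] by (simp add: orthogonal_def inner_commute)
  ultimately have "z \<bullet> z = 0" using yz by (simp add: inner_add_left)
  then have "z = 0" by simp
  with yz y spanR show ?thesis by simp
qed

lemma symm_inner:
  fixes A :: "real^'a^'a"
  assumes "\<forall>i j. A$i$j = A$j$i"
  shows "x \<bullet> (A *v y) = (A *v x) \<bullet> y"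
proof -
  have "x \<bullet> (A *v y) = (\<Sum>i\<in>UNIV. \<Sum>j\<in>UNIV. x$i * A$i$j * y$j)"
    by (simp add: inner_vec_def matrix_vector_mult_def sum_distrib_left mult_ac)
  also have "\<dots> = (\<Sum>j\<in>UNIV. \<Sum>i\<in>UNIV. x$i * A$i$j * y$j)" by (rule sum.swap)
  also have "\<dots> = (\<Sum>j\<in>UNIV. \<Sum>i\<in>UNIV. x$i * A$j$i * y$j)"
    using assms by simp
  also have "\<dots> = (A *v x) \<bullet> y"
    by (simp add: inner_vec_def matrix_vector_mult_def sum_distrib_right sum_distrib_left mult_ac)
  finally show ?thesis .
qed

lemma stress_sym:
  assumes "\<forall>u v. \<omega> u v = \<omega> v u"
  shows "\<forall>i j. stress_matrix \<omega> $i$j = stress_matrix \<omega> $j$i"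
  using assms by (simp add: stress_matrix_def)

lemma stress_entry:
  assumes "\<forall>u. \<omega> u u = 0"
  shows "stress_matrix \<omega> $u$v = (if u = v then (\<Sum>l\<in>UNIV. \<omega> u l) else 0) - \<omega> u v"
  using assms by (simp add: stress_matrix_def sum_diff1)

lemma stress_mv:
  fixes \<omega> :: "'v::finite \<Rightarrow> 'v \<Rightarrow> real"
  assumes "\<forall>u. \<omega> u u = 0"
  shows "(stress_matrix \<omega> *v x) $ u = (\<Sum>v\<in>UNIV. \<omega> u v) * x$u - (\<Sum>v\<in>UNIV. \<omega> u v * x$v)"
proof -
  have "(stress_matrix \<omega> *v x) $ u = (\<Sum>v\<in>UNIV. ((if u = v then (\<Sum>l\<in>UNIV. \<omega> u l) else 0) - \<omega> u v) * x$v)"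
    by (simp add: matrix_vector_mult_def stress_entry[of \<omega>, OF assms])
  also have "\<dots> = (\<Sum>v\<in>UNIV. (if u = v then (\<Sum>l\<in>UNIV. \<omega> u l) * x$v else 0)) - (\<Sum>v\<in>UNIV. \<omega> u v * x$v)"
    by (subst sum_subtractf[symmetric], rule sum.cong) (auto simp: algebra_simps)
  also have "\<dots> = (\<Sum>v\<in>UNIV. \<omega> u v) * x$u - (\<Sum>v\<in>UNIV. \<omega> u v * x$v)"
    by simp
  finally show ?thesis .
qed

lemma stress_quad:
  fixes \<omega> :: "'v::finite \<Rightarrow> 'v \<Rightarrow> real"
  assumes z: "\<forall>u. \<omega> u u = 0" and s: "\<forall>u v. \<omega> u v = \<omega> v u"
  shows "x \<bullet> (stress_matrix \<omega> *v x) = (\<Sum>u\<in>UNIV. \<Sum>v\<in>UNIV. \<omega> u v * (x$u - x$v)^2) / 2"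
proof -
  have A: "x \<bullet> (stress_matrix \<omega> *v x) = (\<Sum>u\<in>UNIV. \<Sum>v\<in>UNIV. \<omega> u v * (x$u * x$u) - \<omega> u v * (x$u * x$v))"
    by (simp add: inner_vec_def stress_mv[of \<omega>, OF z] right_diff_distrib sum_distrib_left sum_distrib_right
        sum_subtractf mult_ac)
  have B: "(\<Sum>u\<in>UNIV. \<Sum>v\<in>UNIV. \<omega> u v * (x$v * x$v)) = (\<Sum>u\<in>UNIV. \<Sum>v\<in>UNIV. \<omega> u v * (x$u * x$u))"
    by (subst sum.swap) (simp add: s)
  have C: "(\<Sum>u\<in>UNIV. \<Sum>v\<in>UNIV. \<omega> u v * (x$u - x$v)^2) =
     (\<Sum>u\<in>UNIV. \<Sum>v\<in>UNIV. \<omega> u v * (x$u * x$u)) + (\<Sum>u\<in>UNIV. \<Sum>v\<in>UNIV. \<omega> u v * (x$v * x$v))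
      - 2 * (\<Sum>u\<in>UNIV. \<Sum>v\<in>UNIV. \<omega> u v * (x$u * x$v))"
    by (simp add: power2_eq_square algebra_simps sum.distrib sum_subtractf sum_distrib_left)
  show ?thesis using A B C by (simp add: sum_subtractf)
qed

lemma quad_aux:
  fixes a b :: real
  assumes a0: "0 \<le> a" and f: "\<And>t. 0 \<le> 2*t*b + t^2*a"
  shows "b = 0"
proof (rule ccontr)
  assume "b \<noteq> 0"
  then have bp: "b^2 > 0" by simp
  have ne: "a + 1 \<noteq> 0" using a0 by linarith
  have "(a+1)^2 * (2 * (- b / (a + 1)) * b) = - 2 * b^2 * (a+1)" using ne by (simp add: power2_eq_square field_simps)
  moreover have "(a+1)^2 * ((- b / (a + 1))^2 * a) = b^2 * a" using ne by (simp add: power_divide field_simps)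
  ultimately have eq: "(a+1)^2 * (2 * (- b / (a + 1)) * b + (- b / (a + 1))^2 * a) = - (b^2 * (a + 2))"
    by (simp only: distrib_left)
  have "0 \<le> (a+1)^2 * (2 * (- b / (a + 1)) * b + (- b / (a + 1))^2 * a)"
    by (rule mult_nonneg_nonneg[OF zero_le_power2 f])
  with eq have "0 \<le> - (b^2 * (a + 2))" by simp
  moreover have "b^2 * (a+2) > 0" using bp a0 by simp
  ultimately show False by linarith
qed

lemma psd_zero:
  fixes A :: "real^'a^'a"
  assumes s: "\<forall>i j. A$i$j = A$j$i" and p: "psd A" and x: "x \<bullet> (A *v x) = 0"
  shows "A *v x = 0"
proof -
  let ?y = "A *v x"
  let ?b = "?y \<bullet> ?y" and ?a = "?y \<bullet> (A *v ?y)"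
  have f: "0 \<le> 2 * t * ?b + t^2 * ?a" for t
  proof -
    have "0 \<le> (x + t *\<^sub>R ?y) \<bullet> (A *v (x + t *\<^sub>R ?y))" using p by (simp add: psd_def)
    also have "\<dots> = x \<bullet> (A *v x) + t * (x \<bullet> (A *v ?y)) + t * (?y \<bullet> (A *v x)) + t^2 * ?a"
      by (simp add: matrix_vector_right_distrib inner_add_left inner_add_right power2_eq_square
          matrix_vector_mult_scaleR algebra_simps)
    also have "x \<bullet> (A *v ?y) = ?b" using symm_inner[OF s, of x ?y] by simp
    finally show ?thesis using x by (simp add: algebra_simps)
  qed
  have a0: "0 \<le> ?a" using p by (simp add: psd_def)
  have "?b = 0" by (rule quad_aux[OF a0 f])
  then show ?thesis by simp
qed




lemma hat_Inl[simp]: "hat x $ Inl j = x $ j" and hat_Inr[simp]: "hat x $ Inr u = 1"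
  by (simp_all add: hat_def)

lemma hat_e: "hat x \<bullet> axis (Inr ()) 1 = 1"
  by (simp add: cart_eq_inner_axis[symmetric])

locale bip =
  fixes p :: "'n::finite \<Rightarrow> real^'k" and q :: "'m::finite \<Rightarrow> real^'k"
    and lam :: "'n \<Rightarrow> real" and mu :: "'m \<Rightarrow> real"
  assumes lam: "\<forall>i. lam i > 0" and mu: "\<forall>j. mu j > 0"
    and eqG: "(\<Sum>i\<in>UNIV. lam i *\<^sub>R outer (hat (p i))) = (\<Sum>j\<in>UNIV. mu j *\<^sub>R outer (hat (q j)))"
begin

definition G :: "real^('k+unit)^('k+unit)" where "G = (\<Sum>j\<in>UNIV. mu j *\<^sub>R outer (hat (q j)))"

lemma Gq: "G *v z = (\<Sum>j\<in>UNIV. (mu j * (hat (q j) \<bullet> z)) *\<^sub>R hat (q j))"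
  by (simp add: G_def sum_outer_mv)

lemma Gp: "G *v z = (\<Sum>i\<in>UNIV. (lam i * (hat (p i) \<bullet> z)) *\<^sub>R hat (p i))"
  by (simp add: G_def eqG[symmetric] sum_outer_mv)

lemma Gsym: "x \<bullet> (G *v y) = (G *v x) \<bullet> y"
  by (simp add: Gq inner_sum_right inner_sum_left mult_ac inner_commute)

lemma Gquad_q: "z \<bullet> (G *v z) = (\<Sum>j\<in>UNIV. mu j * (hat (q j) \<bullet> z)^2)"
  by (simp add: Gq inner_sum_right power2_eq_square mult_ac inner_commute)

lemma Gquad_p: "z \<bullet> (G *v z) = (\<Sum>i\<in>UNIV. lam i * (hat (p i) \<bullet> z)^2)"
  by (simp add: Gp inner_sum_right power2_eq_square mult_ac inner_commute)

lemma G_psd: "0 \<le> z \<bullet> (G *v z)"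
  unfolding Gquad_q using mu by (intro sum_nonneg mult_nonneg_nonneg) (auto simp: less_imp_le)

definition a where "a i = (SOME x. G *v x = hat (p i))"
definition b where "b j = (SOME x. G *v x = hat (q j))"

lemma a: "G *v a i = hat (p i)"
proof -
  have "hat (p i) \<in> range ((*v) G)" by (rule in_range_gram[OF lam]) (simp add: Gp)
  then show ?thesis unfolding a_def by (metis (mono_tags, lifting) imageE someI_ex)
qed

lemma b: "G *v b j = hat (q j)"
proof -
  have "hat (q j) \<in> range ((*v) G)" by (rule in_range_gram[OF mu]) (simp add: Gq)
  then show ?thesis unfolding b_def by (metis (mono_tags, lifting) imageE someI_ex)
qed

definition cc where "cc i j = a i \<bullet> hat (q j)"

lemma cc_b: "cc i j = hat (p i) \<bullet> b j"
  unfolding cc_def by (metis Gsym a b)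

lemma row_id: "(\<Sum>j\<in>UNIV. mu j * cc i j * (hat (q j) \<bullet> z)) = hat (p i) \<bullet> z"
proof -
  have "(\<Sum>j\<in>UNIV. mu j * cc i j * (hat (q j) \<bullet> z)) = a i \<bullet> (G *v z)"
    by (simp add: Gq cc_def inner_sum_right mult_ac)
  also have "\<dots> = hat (p i) \<bullet> z" by (simp add: Gsym a)
  finally show ?thesis .
qed

lemma col_id: "(\<Sum>i\<in>UNIV. lam i * cc i j * (hat (p i) \<bullet> z)) = hat (q j) \<bullet> z"
proof -
  have "(\<Sum>i\<in>UNIV. lam i * cc i j * (hat (p i) \<bullet> z)) = b j \<bullet> (G *v z)"
    by (simp add: Gp cc_b inner_sum_right mult_ac inner_commute)
  also have "\<dots> = hat (q j) \<bullet> z" by (simp add: Gsym b)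
  finally show ?thesis .
qed

lemma row_sum: "(\<Sum>j\<in>UNIV. mu j * cc i j) = 1"
  using row_id[of i "axis (Inr ()) 1"] by (simp add: hat_e)

lemma col_sum: "(\<Sum>i\<in>UNIV. lam i * cc i j) = 1"
  using col_id[of j "axis (Inr ()) 1"] by (simp add: hat_e)

definition W where "W i j = lam i * mu j * cc i j"

definition om :: "('n+'m) \<Rightarrow> ('n+'m) \<Rightarrow> real" where
  "om u v = (case u of Inl i \<Rightarrow> (case v of Inr j \<Rightarrow> W i j | Inl _ \<Rightarrow> 0)
                     | Inr j \<Rightarrow> (case v of Inl i \<Rightarrow> W i j | Inr _ \<Rightarrow> 0))"

lemma om_simps[simp]: "om (Inl i) (Inr j) = W i j" "om (Inr j) (Inl i) = W i j"
  "om (Inl i) (Inl i') = 0" "om (Inr j) (Inr j') = 0"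
  by (simp_all add: om_def)

lemma om_sym: "\<forall>u v. om u v = om v u"
  by (auto simp: om_def split: sum.splits)

lemma om_diag: "\<forall>u. om u u = 0"
  by (auto simp: om_def split: sum.splits)

lemma om_edge: "\<not> Kbip u v \<Longrightarrow> om u v = 0"
  by (auto simp: om_def Kbip_def split: sum.splits)

definition Om where "Om = stress_matrix om"

lemma Om_sym: "\<forall>i j. Om$i$j = Om$j$i"
  unfolding Om_def by (rule stress_sym[OF om_sym])

lemma Om_Inl: "(Om *v x) $ Inl i = lam i * x $ Inl i - (\<Sum>j\<in>UNIV. W i j * x $ Inr j)"
proof -
  have "(\<Sum>v\<in>UNIV. om (Inl i) v) = lam i"
    using row_sum[of i] by (simp add: sum_UNIV_plus W_def sum_distrib_left[symmetric] mult.assoc)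
  then show ?thesis unfolding Om_def by (simp add: stress_mv[of om, OF om_diag] sum_UNIV_plus)
qed

lemma Om_Inr: "(Om *v x) $ Inr j = mu j * x $ Inr j - (\<Sum>i\<in>UNIV. W i j * x $ Inl i)"
proof -
  have "(\<Sum>v\<in>UNIV. om (Inr j) v) = mu j"
  proof -
    have "(\<Sum>i\<in>UNIV. lam i * (mu j * cc i j)) = mu j * (\<Sum>i\<in>UNIV. lam i * cc i j)"
      by (simp add: sum_distrib_left mult_ac)
    then show ?thesis using col_sum[of j] by (simp add: sum_UNIV_plus W_def mult.assoc)
  qed
  then show ?thesis unfolding Om_def by (simp add: stress_mv[of om, OF om_diag] sum_UNIV_plus)
qed

end



lemma mv_sum: "(M::real^'a^'b) *v (\<Sum>i\<in>A. g i) = (\<Sum>i\<in>A. M *v g i)"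
  by (rule linear_sum[OF matrix_vector_mul_linear])

lemma bc_simps[simp]: "bip_config p q (Inl i) = p i" "bip_config p q (Inr j) = q j"
  by (simp_all add: bip_config_def)

context bip begin

lemma ker_of:
  assumes "\<forall>v. x$v = hat (bip_config p q v) \<bullet> z"
  shows "Om *v x = 0"
proof -
  have "(Om *v x) $ u = 0" for u
  proof (cases u)
    case (Inl i)
    have "(\<Sum>j\<in>UNIV. W i j * x $ Inr j) = lam i * (\<Sum>j\<in>UNIV. mu j * cc i j * (hat (q j) \<bullet> z))"
      using assms by (simp add: W_def sum_distrib_left mult_ac)
    then show ?thesis using Inl assms by (simp add: Om_Inl row_id)
  next
    case (Inr j)
    have "(\<Sum>i\<in>UNIV. W i j * x $ Inl i) = mu j * (\<Sum>i\<in>UNIV. lam i * cc i j * (hat (p i) \<bullet> z))"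
      using assms by (simp add: W_def sum_distrib_left mult_ac)
    then show ?thesis using Inr assms by (simp add: Om_Inr col_id)
  qed
  then show ?thesis by (simp add: vec_eq_iff)
qed

lemma ker_to:
  assumes "Om *v x = 0"
  shows "\<exists>z. \<forall>v. x$v = hat (bip_config p q v) \<bullet> z"
proof -
  define z where "z = (\<Sum>j\<in>UNIV. (mu j * x $ Inr j) *\<^sub>R b j)"
  have Gz: "G *v z = (\<Sum>j\<in>UNIV. (mu j * x $ Inr j) *\<^sub>R hat (q j))"
    by (simp add: z_def mv_sum matrix_vector_mult_scaleR b)
  have L: "x $ Inl i = hat (p i) \<bullet> z" for i
  proof -
    have "lam i * x $ Inl i = (\<Sum>j\<in>UNIV. W i j * x $ Inr j)"
      using assms Om_Inl[of x i] by simp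
    also have "\<dots> = lam i * (a i \<bullet> (G *v z))"
      by (simp add: Gz W_def cc_def inner_sum_right sum_distrib_left mult_ac)
    finally have "lam i * x $ Inl i = lam i * (a i \<bullet> (G *v z))" .
    moreover have "lam i \<noteq> 0" using lam[rule_format, of i] by simp
    ultimately have "x $ Inl i = a i \<bullet> (G *v z)" by simp
    then show ?thesis by (simp add: Gsym a)
  qed
  have R: "x $ Inr j = hat (q j) \<bullet> z" for j
  proof -
    have "mu j * x $ Inr j = (\<Sum>i\<in>UNIV. W i j * x $ Inl i)"
      using assms Om_Inr[of x j] by simp
    also have "\<dots> = mu j * (\<Sum>i\<in>UNIV. lam i * cc i j * (hat (p i) \<bullet> z))"
      by (simp add: L W_def sum_distrib_left mult_ac)
    finally have "mu j * x $ Inr j = mu j * (\<Sum>i\<in>UNIV. lam i * cc i j * (hat (p i) \<bullet> z))" .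
    moreover have "mu j \<noteq> 0" using mu[rule_format, of j] by simp
    ultimately have "x $ Inr j = (\<Sum>i\<in>UNIV. lam i * cc i j * (hat (p i) \<bullet> z))" by simp
    then show ?thesis by (simp add: col_id)
  qed
  show ?thesis
  proof (intro exI[of _ z] allI)
    fix v show "x$v = hat (bip_config p q v) \<bullet> z" by (cases v) (simp_all add: L R)
  qed
qed

lemma Om_psd: "psd Om"
  unfolding psd_def
proof
  fix x :: "real^('n+'m)"
  define u where "u = (\<Sum>i\<in>UNIV. (lam i * x $ Inl i) *\<^sub>R a i)"
  define v where "v = (\<Sum>j\<in>UNIV. (mu j * x $ Inr j) *\<^sub>R b j)"
  have Gu: "G *v u = (\<Sum>i\<in>UNIV. (lam i * x $ Inl i) *\<^sub>R hat (p i))"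
    by (simp add: u_def mv_sum matrix_vector_mult_scaleR a)
  have Gv: "G *v v = (\<Sum>j\<in>UNIV. (mu j * x $ Inr j) *\<^sub>R hat (q j))"
    by (simp add: v_def mv_sum matrix_vector_mult_scaleR b)
  have S: "(\<Sum>i\<in>UNIV. \<Sum>j\<in>UNIV. W i j * x $ Inl i * x $ Inr j) = u \<bullet> (G *v v)"
    by (simp add: Gv u_def W_def cc_def inner_sum_right inner_sum_left sum_distrib_left mult_ac) (rule sum.swap)
  have E: "x \<bullet> (Om *v x) = (\<Sum>i\<in>UNIV. lam i * (x $ Inl i)^2) + (\<Sum>j\<in>UNIV. mu j * (x $ Inr j)^2)
        - 2 * (\<Sum>i\<in>UNIV. \<Sum>j\<in>UNIV. W i j * x $ Inl i * x $ Inr j)"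
  proof -
    have "x \<bullet> (Om *v x) = (\<Sum>i\<in>UNIV. x $ Inl i * (Om *v x) $ Inl i) + (\<Sum>j\<in>UNIV. x $ Inr j * (Om *v x) $ Inr j)"
      by (simp add: inner_vec_def sum_UNIV_plus)
    also have "\<dots> = (\<Sum>i\<in>UNIV. lam i * (x $ Inl i)^2) - (\<Sum>i\<in>UNIV. \<Sum>j\<in>UNIV. W i j * x $ Inl i * x $ Inr j)
       + ((\<Sum>j\<in>UNIV. mu j * (x $ Inr j)^2) - (\<Sum>j\<in>UNIV. \<Sum>i\<in>UNIV. W i j * x $ Inl i * x $ Inr j))"
      by (simp add: Om_Inl Om_Inr right_diff_distrib sum_subtractf sum_distrib_left power2_eq_square mult_ac)
    also have "(\<Sum>j\<in>UNIV. \<Sum>i\<in>UNIV. W i j * x $ Inl i * x $ Inr j) = (\<Sum>i\<in>UNIV. \<Sum>j\<in>UNIV. W i j * x $ Inl i * x $ Inr j)"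
      by (rule sum.swap)
    finally show ?thesis by simp
  qed
  have P1: "u \<bullet> (G *v u) \<le> (\<Sum>i\<in>UNIV. lam i * (x $ Inl i)^2)"
  proof -
    have "0 \<le> (\<Sum>i\<in>UNIV. lam i * (x $ Inl i - hat (p i) \<bullet> u)^2)"
      using lam by (intro sum_nonneg mult_nonneg_nonneg) (auto simp: less_imp_le)
    also have "\<dots> = (\<Sum>i\<in>UNIV. lam i * (x $ Inl i)^2) - 2 * (\<Sum>i\<in>UNIV. lam i * x $ Inl i * (hat (p i) \<bullet> u)) + (\<Sum>i\<in>UNIV. lam i * (hat (p i) \<bullet> u)^2)"
      by (simp add: power2_eq_square right_diff_distrib left_diff_distrib distrib_left sum.distrib sum_subtractf sum_distrib_left mult_ac)
    also have "(\<Sum>i\<in>UNIV. lam i * x $ Inl i * (hat (p i) \<bullet> u)) = (G *v u) \<bullet> u"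
      by (simp add: Gu inner_sum_left)
    also have "(\<Sum>i\<in>UNIV. lam i * (hat (p i) \<bullet> u)^2) = u \<bullet> (G *v u)"
      by (simp add: Gquad_p)
    finally show ?thesis by (simp add: inner_commute)
  qed
  have P2: "v \<bullet> (G *v v) \<le> (\<Sum>j\<in>UNIV. mu j * (x $ Inr j)^2)"
  proof -
    have "0 \<le> (\<Sum>j\<in>UNIV. mu j * (x $ Inr j - hat (q j) \<bullet> v)^2)"
      using mu by (intro sum_nonneg mult_nonneg_nonneg) (auto simp: less_imp_le)
    also have "\<dots> = (\<Sum>j\<in>UNIV. mu j * (x $ Inr j)^2) - 2 * (\<Sum>j\<in>UNIV. mu j * x $ Inr j * (hat (q j) \<bullet> v)) + (\<Sum>j\<in>UNIV. mu j * (hat (q j) \<bullet> v)^2)"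
      by (simp add: power2_eq_square right_diff_distrib left_diff_distrib distrib_left sum.distrib sum_subtractf sum_distrib_left mult_ac)
    also have "(\<Sum>j\<in>UNIV. mu j * x $ Inr j * (hat (q j) \<bullet> v)) = (G *v v) \<bullet> v"
      by (simp add: Gv inner_sum_left)
    also have "(\<Sum>j\<in>UNIV. mu j * (hat (q j) \<bullet> v)^2) = v \<bullet> (G *v v)"
      by (simp add: Gquad_q)
    finally show ?thesis by (simp add: inner_commute)
  qed
  have P3: "0 \<le> u \<bullet> (G *v u) + v \<bullet> (G *v v) - 2 * (u \<bullet> (G *v v))"
  proof -
    have "0 \<le> (u - v) \<bullet> (G *v (u - v))" by (rule G_psd)
    also have "\<dots> = u \<bullet> (G *v u) + v \<bullet> (G *v v) - u \<bullet> (G *v v) - v \<bullet> (G *v u)"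
      by (simp add: matrix_vector_mult_diff_distrib inner_diff_left inner_diff_right)
    also have "v \<bullet> (G *v u) = u \<bullet> (G *v v)" by (subst Gsym) (rule inner_commute)
    finally show ?thesis by simp
  qed
  show "0 \<le> x \<bullet> (Om *v x)" using E S P1 P2 P3 by linarith
qed

end



definition Lft :: "real^'k \<Rightarrow> real^('k+unit)" where
  "Lft x = (\<chi> i. case i of Inl j \<Rightarrow> x $ j | Inr _ \<Rightarrow> 0)"

lemma Lft_simps[simp]: "Lft x $ Inl j = x $ j" "Lft x $ Inr u = 0"
  by (simp_all add: Lft_def)

lemma linear_Lft: "linear Lft"
  by (rule linearI) (auto simp: vec_eq_iff Lft_def split: sum.splits)

lemma inj_Lft: "inj Lft"
  by (rule injI) (metis Lft_simps(1) vec_eq_iff)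

lemma hat_decomp: "hat x = hat a + Lft (x - a)"
  by (auto simp: vec_eq_iff hat_def Lft_def split: sum.splits)

lemma dim_hat:
  fixes S :: "(real^'k) set"
  assumes "a \<in> S"
  shows "int (dim (hat ` S)) = aff_dim S + 1"
proof -
  define D where "D = (\<lambda>x. x - a) ` S"
  have ad: "aff_dim S = int (dim D)"
    unfolding D_def by (rule aff_dim_eq_dim_subtract) (simp add: assms hull_inc)
  have sp: "span (hat ` S) = span (insert (hat a) (Lft ` D))"
  proof
    show "span (hat ` S) \<subseteq> span (insert (hat a) (Lft ` D))"
    proof (rule span_minimal[OF _ subspace_span], clarify)
      fix x assume "x \<in> S"
      then have "Lft (x - a) \<in> span (insert (hat a) (Lft ` D))" by (auto simp: D_def intro: span_base)
      moreover have "hat a \<in> span (insert (hat a) (Lft ` D))" by (auto intro: span_base)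
      ultimately show "hat x \<in> span (insert (hat a) (Lft ` D))"
        by (subst hat_decomp[of x a]) (rule span_add)
    qed
  next
    show "span (insert (hat a) (Lft ` D)) \<subseteq> span (hat ` S)"
    proof (rule span_minimal[OF _ subspace_span], clarify)
      fix y assume "y \<in> insert (hat a) (Lft ` D)"
      then show "y \<in> span (hat ` S)"
      proof
        assume "y = hat a" then show ?thesis using assms by (auto intro: span_base)
      next
        assume "y \<in> Lft ` D"
        then obtain x where x: "x \<in> S" "y = Lft (x - a)" by (auto simp: D_def)
        then have "y = hat x - hat a" using hat_decomp[of x a] by simp
        then show ?thesis using x assms by (metis span_diff span_base imageI)
      qed
    qed
  qed
  have notin: "hat a \<notin> span (Lft ` D)"
  proof
    assume "hat a \<in> span (Lft ` D)"
    moreover have "span (Lft ` D) \<subseteq> {v. v $ Inr () = 0}"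
      by (rule span_minimal) (auto simp: subspace_def)
    ultimately show False by auto
  qed
  have "dim (hat ` S) = dim (insert (hat a) (Lft ` D))"
    by (metis dim_span sp)
  also have "\<dots> = dim (Lft ` D) + 1" using notin by (simp add: dim_insert)
  also have "dim (Lft ` D) = dim D"
    by (rule dim_image_eq[OF linear_Lft]) (meson inj_Lft inj_on_subset subset_UNIV)
  finally show ?thesis using ad by simp
qed

lemma dim_kernel_sym:
  fixes A :: "real^'v^'v"
  assumes s: "\<forall>i j. A$i$j = A$j$i"
  shows "rank A + dim {x. A *v x = 0} = CARD('v)"
proof -
  have sub: "subspace (range ((*v) A))"
    using linear_subspace_image[OF matrix_vector_mul_linear subspace_UNIV] by simp
  have eq: "{y \<in> UNIV. \<forall>x \<in> range ((*v) A). orthogonal x y} = {x. A *v x = 0}"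
  proof (auto simp: orthogonal_def)
    fix y w assume "\<forall>x. (A *v x) \<bullet> y = 0"
    then have "(A *v (A *v y)) \<bullet> y = 0" by blast
    then have "(A *v y) \<bullet> (A *v y) = 0" using symm_inner[OF s, of "A *v y" y] by simp
    then show "A *v y = 0" by simp
  next
    fix x assume "A *v x = 0"
    then show "(A *v w) \<bullet> x = 0" for w using symm_inner[OF s, of w x] by simp
  qed
  have "dim {y \<in> UNIV. \<forall>x \<in> range ((*v) A). orthogonal x y} + dim (range ((*v) A)) = dim (UNIV :: (real^'v) set)"
    by (rule dim_subspace_orthogonal_to_vectors[OF sub subspace_UNIV]) simp
  then show ?thesis using eq by (simp add: rank_dim_range dim_UNIV)
qed

lemma aff_comb:
  fixes x :: "'i::finite \<Rightarrow> 'a::real_vector"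
  assumes "sum w UNIV = 1" "\<forall>i. x i \<in> S"
  shows "(\<Sum>i\<in>UNIV. w i *\<^sub>R x i) \<in> affine hull S"
proof -
  obtain i0 :: 'i where True by blast
  let ?a = "x i0"
  have a: "?a \<in> affine hull S" using assms by (simp add: hull_inc)
  have "(\<Sum>i\<in>UNIV. w i *\<^sub>R (x i - ?a)) = (\<Sum>i\<in>UNIV. w i *\<^sub>R x i) - ?a"
    using assms(1) by (simp add: scaleR_diff_right sum_subtractf scaleR_sum_left[symmetric])
  then have "(\<Sum>i\<in>UNIV. w i *\<^sub>R x i) = ?a + (\<Sum>i\<in>UNIV. w i *\<^sub>R (- ?a + x i))"
    by (simp add: algebra_simps)
  moreover have "(\<Sum>i\<in>UNIV. w i *\<^sub>R (- ?a + x i)) \<in> span ((+) (- ?a) ` S)"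
    using assms(2) by (intro span_sum span_scale span_base) auto
  ultimately show ?thesis by (subst affine_hull_span_gen[OF a]) auto
qed




context bip begin

lemma rank_Om: "int (rank Om) = int CARD('n+'m) - aff_dim (range (bip_config p q)) - 1"
proof -
  define H :: "real^('k+unit)^('n+'m)" where "H = (\<chi> v. hat (bip_config p q v))"
  have Hz: "(H *v z) $ v = hat (bip_config p q v) \<bullet> z" for z v
    by (simp add: H_def matrix_vector_mult_def inner_vec_def mult_ac)
  have ker: "{x. Om *v x = 0} = range ((*v) H)"
  proof (auto)
    fix x assume "Om *v x = 0"
    then obtain z where "\<forall>v. x$v = hat (bip_config p q v) \<bullet> z" using ker_to by blast
    then have "x = H *v z" by (simp add: vec_eq_iff Hz)
    then show "x \<in> range ((*v) H)" by blast
  next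
    fix z show "Om *v (H *v z) = 0" by (rule ker_of[of _ z]) (simp add: Hz)
  qed
  have rows: "rows H = hat ` range (bip_config p q)"
    by (auto simp: rows_def row_def H_def vec_lambda_eta)
  obtain i0 :: 'n where True by blast
  have "dim {x. Om *v x = 0} = rank H" by (simp add: ker rank_dim_range)
  also have "\<dots> = dim (hat ` range (bip_config p q))" by (simp add: row_rank_def rows)
  finally have dk: "int (dim {x. Om *v x = 0}) = aff_dim (range (bip_config p q)) + 1"
    using dim_hat[OF rangeI[of "bip_config p q" "Inl i0"]] by simp
  have "rank Om + dim {x. Om *v x = 0} = CARD('n+'m)" by (rule dim_kernel_sym[OF Om_sym])
  then show ?thesis using dk by linarith
qed

lemma q_comb: "q j = (\<Sum>i\<in>UNIV. (lam i * cc i j) *\<^sub>R p i)"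
proof -
  have "hat (q j) = (\<Sum>i\<in>UNIV. (lam i * cc i j) *\<^sub>R hat (p i))"
    using b[of j] by (simp add: Gp cc_b)
  then have "hat (q j) $ Inl k = (\<Sum>i\<in>UNIV. (lam i * cc i j) *\<^sub>R p i) $ k" for k
    by (simp add: sum_component)
  then show ?thesis by (simp add: vec_eq_iff)
qed

lemma p_comb: "p i = (\<Sum>j\<in>UNIV. (mu j * cc i j) *\<^sub>R q j)"
proof -
  have "hat (p i) = (\<Sum>j\<in>UNIV. (mu j * cc i j) *\<^sub>R hat (q j))"
    using a[of i] by (simp add: Gq cc_def inner_commute)
  then have "hat (p i) $ Inl k = (\<Sum>j\<in>UNIV. (mu j * cc i j) *\<^sub>R q j) $ k" for k
    by (simp add: sum_component)
  then show ?thesis by (simp add: vec_eq_iff)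
qed

lemma aff_eq: "affine hull (range p) = affine hull (range q)"
proof
  have "range q \<subseteq> affine hull (range p)"
  proof clarify
    fix j
    have "(\<Sum>i\<in>UNIV. (lam i * cc i j) *\<^sub>R p i) \<in> affine hull (range p)"
      by (rule aff_comb) (simp_all add: col_sum)
    then show "q j \<in> affine hull (range p)" by (simp add: q_comb[symmetric])
  qed
  then show "affine hull (range q) \<subseteq> affine hull (range p)"
    by (simp add: hull_minimal)
next
  have "range p \<subseteq> affine hull (range q)"
  proof clarify
    fix i
    have "(\<Sum>j\<in>UNIV. (mu j * cc i j) *\<^sub>R q j) \<in> affine hull (range q)"
      by (rule aff_comb) (simp_all add: row_sum)
    then show "p i \<in> affine hull (range q)" by (simp add: p_comb[symmetric])
  qed
  then show "affine hull (range p) \<subseteq> affine hull (range q)"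
    by (simp add: hull_minimal)
qed

end



lemma orth_span:
  assumes "\<forall>x\<in>S. x \<bullet> w = 0" "y \<in> span S"
  shows "y \<bullet> w = 0"
proof -
  have "span S \<subseteq> {y. y \<bullet> w = 0}"
    using assms(1) by (intro span_minimal) (auto simp: subspace_def inner_add_left)
  then show ?thesis using assms(2) by auto
qed

lemma outer_comp[simp]: "outer u $ a $ b = u$a * u$b"
  by (simp add: outer_def)

lemma sum_mat_comp: "(\<Sum>i\<in>A. c i *\<^sub>R outer (u i)) $ x $ y = (\<Sum>i\<in>A. c i * (u i $ x * u i $ y))"
  by (simp add: sum_component outer_def)

lemma quadQ: "x \<bullet> (Q *v x) = (\<Sum>k\<in>UNIV. \<Sum>l\<in>UNIV. Q$k$l * (x$k * x$l))"
  by (simp add: inner_vec_def matrix_vector_mult_def sum_distrib_left mult_ac)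

context bip begin

lemma s_eq: "(\<Sum>i\<in>UNIV. lam i) = (\<Sum>j\<in>UNIV. mu j)"
  using arg_cong[OF eqG, of "\<lambda>M. M $ Inr () $ Inr ()"] by (simp add: sum_mat_comp)

lemma c_eq: "(\<Sum>i\<in>UNIV. lam i *\<^sub>R p i) = (\<Sum>j\<in>UNIV. mu j *\<^sub>R q j)"
proof -
  have "(\<Sum>i\<in>UNIV. lam i *\<^sub>R p i) $ k = (\<Sum>j\<in>UNIV. mu j *\<^sub>R q j) $ k" for k
    using arg_cong[OF eqG, of "\<lambda>M. M $ Inl k $ Inr ()"] by (simp add: sum_mat_comp sum_component)
  then show ?thesis by (simp add: vec_eq_iff)
qed

lemma t_eq: "(\<Sum>i\<in>UNIV. lam i * (p i \<bullet> (Q *v p i))) = (\<Sum>j\<in>UNIV. mu j * (q j \<bullet> (Q *v q j)))"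
proof -
  have e: "(\<Sum>i\<in>UNIV. lam i * (p i $ k * p i $ l)) = (\<Sum>j\<in>UNIV. mu j * (q j $ k * q j $ l))" for k l
    using arg_cong[OF eqG, of "\<lambda>M. M $ Inl k $ Inl l"] by (simp add: sum_mat_comp)
  have "(\<Sum>i\<in>UNIV. lam i * (p i \<bullet> (Q *v p i))) = (\<Sum>k\<in>UNIV. \<Sum>l\<in>UNIV. Q$k$l * (\<Sum>i\<in>UNIV. lam i * (p i $ k * p i $ l)))"
    by (simp add: quadQ sum_distrib_left mult_ac) (subst sum.swap, rule sum.cong, simp, subst sum.swap, simp)
  also have "\<dots> = (\<Sum>k\<in>UNIV. \<Sum>l\<in>UNIV. Q$k$l * (\<Sum>j\<in>UNIV. mu j * (q j $ k * q j $ l)))" by (simp add: e)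
  also have "\<dots> = (\<Sum>j\<in>UNIV. mu j * (q j \<bullet> (Q *v q j)))"
    by (simp add: quadQ sum_distrib_left mult_ac) (subst sum.swap, rule sum.cong, simp, subst sum.swap, simp)
  finally show ?thesis .
qed

lemma conic_gen:
  fixes Q :: "real^'k^'k"
  assumes Qs: "\<forall>k l. Q$k$l = Q$l$k"
    and e: "\<forall>i j. (q j - p i) \<bullet> (Q *v (q j - p i)) = 0"
    and x: "x \<in> direction_space (bip_config p q)" and y: "y \<in> direction_space (bip_config p q)"
  shows "x \<bullet> (Q *v y) = 0"
proof -
  define B where "B u v = u \<bullet> (Q *v v)" for u v
  have Bsym: "B u v = B v u" for u v using symm_inner[OF Qs, of u v] by (simp add: B_def inner_commute)
  have Bdl: "B (u - v) w = B u w - B v w" for u v w by (simp add: B_def inner_diff_left)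
  have Bdr: "B u (v - w) = B u v - B u w" for u v w by (simp add: B_def inner_diff_right matrix_vector_mult_diff_distrib)
  have Bsl: "B (r *\<^sub>R u) v = r * B u v" for r u v by (simp add: B_def)
  have Bsr: "B u (r *\<^sub>R v) = r * B u v" for r u v by (simp add: B_def matrix_vector_mult_scaleR)
  have Bsumr: "B u (\<Sum>i\<in>UNIV. f i) = (\<Sum>i\<in>UNIV. B u (f i))" for u and f :: "'z::finite \<Rightarrow> real^'k"
    by (simp add: B_def mv_sum inner_sum_right)
  have Bsuml: "B (\<Sum>i\<in>UNIV. f i) u = (\<Sum>i\<in>UNIV. B (f i) u)" for u and f :: "'z::finite \<Rightarrow> real^'k"
    by (simp add: B_def inner_sum_left)
  define s where "s = (\<Sum>i\<in>UNIV. lam i)"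
  define c where "c = (\<Sum>i\<in>UNIV. lam i *\<^sub>R p i)"
  define t where "t = (\<Sum>i\<in>UNIV. lam i * B (p i) (p i))"
  have s2: "s = (\<Sum>j\<in>UNIV. mu j)" using s_eq by (simp add: s_def)
  have c2: "c = (\<Sum>j\<in>UNIV. mu j *\<^sub>R q j)" using c_eq by (simp add: c_def)
  have t2: "t = (\<Sum>j\<in>UNIV. mu j * B (q j) (q j))" using t_eq[of Q] by (simp add: t_def B_def)
  have spos: "s > 0" unfolding s_def using lam by (intro sum_pos) auto
  have edge: "B (p i) (p i) - 2 * B (p i) (q j) + B (q j) (q j) = 0" for i j
  proof -
    have "0 = B (q j - p i) (q j - p i)" using e by (simp add: B_def)
    also have "\<dots> = B (q j) (q j) - B (q j) (p i) - B (p i) (q j) + B (p i) (p i)"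
      by (simp add: Bdl Bdr)
    finally show ?thesis using Bsym[of "q j" "p i"] by linarith
  qed
  have Bpc: "(\<Sum>j\<in>UNIV. mu j * B (p i) (q j)) = B (p i) c" for i
    by (simp add: c2 Bsumr Bsr)
  have Bcq: "(\<Sum>i\<in>UNIV. lam i * B (p i) (q j)) = B c (q j)" for j
    by (simp add: c_def Bsuml Bsl)
  have Bcc: "(\<Sum>i\<in>UNIV. lam i * B (p i) c) = B c c"
    by (simp add: c_def Bsuml Bsl)
  have r1: "s * B (p i) (p i) - 2 * B (p i) c + t = 0" for i
  proof -
    have "0 = (\<Sum>j\<in>UNIV. mu j * (B (p i) (p i) - 2 * B (p i) (q j) + B (q j) (q j)))"
      by (simp add: edge)
    also have "\<dots> = (\<Sum>j\<in>UNIV. mu j * B (p i) (p i)) - 2 * (\<Sum>j\<in>UNIV. mu j * B (p i) (q j)) + (\<Sum>j\<in>UNIV. mu j * B (q j) (q j))"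
      by (simp add: algebra_simps sum.distrib sum_subtractf sum_distrib_left)
    also have "(\<Sum>j\<in>UNIV. mu j * B (p i) (p i)) = s * B (p i) (p i)" by (simp add: s2 sum_distrib_right)
    finally show ?thesis by (simp add: Bpc t2)
  qed
  have r2: "s * B (q j) (q j) - 2 * B c (q j) + t = 0" for j
  proof -
    have "0 = (\<Sum>i\<in>UNIV. lam i * (B (p i) (p i) - 2 * B (p i) (q j) + B (q j) (q j)))"
      by (simp add: edge)
    also have "\<dots> = (\<Sum>i\<in>UNIV. lam i * B (p i) (p i)) - 2 * (\<Sum>i\<in>UNIV. lam i * B (p i) (q j)) + (\<Sum>i\<in>UNIV. lam i * B (q j) (q j))"
      by (simp add: algebra_simps sum.distrib sum_subtractf sum_distrib_left)
    also have "(\<Sum>i\<in>UNIV. lam i * B (q j) (q j)) = s * B (q j) (q j)" by (simp add: s_def sum_distrib_right)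
    finally show ?thesis by (simp add: Bcq t_def)
  qed
  have r3: "2 * s * t - 2 * B c c = 0"
  proof -
    have "0 = (\<Sum>i\<in>UNIV. lam i * (s * B (p i) (p i) - 2 * B (p i) c + t))"
      by (simp add: r1)
    also have "\<dots> = s * (\<Sum>i\<in>UNIV. lam i * B (p i) (p i)) - 2 * (\<Sum>i\<in>UNIV. lam i * B (p i) c) + (\<Sum>i\<in>UNIV. lam i) * t"
      by (simp add: algebra_simps sum.distrib sum_subtractf sum_distrib_left sum_distrib_right)
    finally show ?thesis by (simp add: Bcc t_def s_def)
  qed
  define c' where "c' = (1/s) *\<^sub>R c"
  have key: "B (p i - c') (q j - c') = 0" for i j
  proof -
    have "B (p i - c') (q j - c') = B (p i) (q j) - B (p i) c' - (B c' (q j) - B c' c')"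
      by (simp add: Bdl Bdr)
    also have "\<dots> = B (p i) (q j) - (1/s) * B (p i) c - ((1/s) * B c (q j) - (1/s) * ((1/s) * B c c))"
      by (simp only: c'_def Bsl Bsr)
    also have "\<dots> = 0"
    proof -
      have sne: "s \<noteq> 0" using spos by simp
      have "B c c = s * t" using r3 by linarith
      then have A: "(1/s) * ((1/s) * B c c) = t / s" using sne by (simp add: field_simps)
      have "2 * B (p i) (q j) = B (p i) (p i) + B (q j) (q j)" using edge[of i j] by linarith
      then have "s * (2 * B (p i) (q j)) = (2 * B (p i) c - t) + (2 * B c (q j) - t)"
        using r1[of i] r2[of j] by (simp add: distrib_left)
      then have "B (p i) (q j) = (B (p i) c + B c (q j) - t) / s" using sne by (simp add: field_simps)
      then show ?thesis using A sne apply (simp add: field_simps) apply (drule arg_cong[where f="\<lambda>r. s*r"]) by (simp add: distrib_left)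
    qed
    finally show ?thesis .
  qed
  define Sp where "Sp = span (range (\<lambda>i. p i - c'))"
  define Sq where "Sq = span (range (\<lambda>j. q j - c'))"
  have inSp: "bip_config p q w - c' \<in> Sp" for w
  proof (cases w)
    case (Inl i) then show ?thesis by (simp add: Sp_def span_base)
  next
    case (Inr j)
    have "q j - c' = (\<Sum>i\<in>UNIV. (lam i * cc i j) *\<^sub>R (p i - c'))"
      by (subst q_comb) (simp add: scaleR_diff_right sum_subtractf scaleR_sum_left[symmetric] col_sum)
    also have "\<dots> \<in> Sp" unfolding Sp_def by (intro span_sum span_scale span_base) auto
    finally show ?thesis using Inr by simp
  qed
  have inSq: "bip_config p q w - c' \<in> Sq" for w
  proof (cases w)
    case (Inr j) then show ?thesis by (simp add: Sq_def span_base)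
  next
    case (Inl i)
    have "p i - c' = (\<Sum>j\<in>UNIV. (mu j * cc i j) *\<^sub>R (q j - c'))"
      by (subst p_comb) (simp add: scaleR_diff_right sum_subtractf scaleR_sum_left[symmetric] row_sum)
    also have "\<dots> \<in> Sq" unfolding Sq_def by (intro span_sum span_scale span_base) auto
    finally show ?thesis using Inl by simp
  qed
  have DSp: "direction_space (bip_config p q) \<subseteq> Sp"
    unfolding direction_space_def
  proof (rule span_minimal, clarify)
    fix u v
    have "bip_config p q u - bip_config p q v = (bip_config p q u - c') - (bip_config p q v - c')" by simp
    then show "bip_config p q u - bip_config p q v \<in> Sp" using inSp[of u] inSp[of v]
      by (metis Sp_def span_diff)
  qed (simp add: Sp_def)
  have DSq: "direction_space (bip_config p q) \<subseteq> Sq"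
    unfolding direction_space_def
  proof (rule span_minimal, clarify)
    fix u v
    have "bip_config p q u - bip_config p q v = (bip_config p q u - c') - (bip_config p q v - c')" by simp
    then show "bip_config p q u - bip_config p q v \<in> Sq" using inSq[of u] inSq[of v]
      by (metis Sq_def span_diff)
  qed (simp add: Sq_def)
  have xSp: "x \<in> Sp" using x DSp by auto
  have ySq: "y \<in> Sq" using y DSq by auto
  have "\<forall>g\<in>range (\<lambda>j. q j - c'). g \<bullet> (Q *v x) = 0"
  proof
    fix g assume "g \<in> range (\<lambda>j. q j - c')"
    then obtain j where g: "g = q j - c'" by auto
    have "\<forall>h\<in>range (\<lambda>i. p i - c'). h \<bullet> (Q *v g) = 0" using key g by (auto simp: B_def)
    then have "x \<bullet> (Q *v g) = 0" using xSp orth_span unfolding Sp_def by blast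
    then show "g \<bullet> (Q *v x) = 0" using Bsym[of x g] by (simp add: B_def)
  qed
  then have "y \<bullet> (Q *v x) = 0" using ySq orth_span unfolding Sq_def by blast
  then show ?thesis using Bsym[of x y] by (simp add: B_def)
qed

end



lemma hat_axis_Inl: "hat x \<bullet> axis (Inl k) 1 = x $ k"
  by (simp add: cart_eq_inner_axis[symmetric])

lemma hat_diff_inner: "(hat x - hat y) \<bullet> z = (x - y) \<bullet> (\<chi> k. z $ Inl k)"
  by (simp add: inner_vec_def sum_UNIV_plus algebra_simps)

lemma Kbip_simps[simp]: "Kbip (Inl i) (Inr j)" "Kbip (Inr j) (Inl i)"
  by (auto simp: Kbip_def)

context bip begin

lemma Om_coord: "Om *v (\<chi> v. bip_config p q v $ k) = 0"
  by (rule ker_of[of _ "axis (Inl k) 1"]) (simp add: hat_axis_Inl)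

lemma om_quad: "x \<bullet> (Om *v x) = (\<Sum>u\<in>UNIV. \<Sum>v\<in>UNIV. om u v * (x$u - x$v)^2) / 2"
  unfolding Om_def by (rule stress_quad[OF om_diag om_sym])

lemma equil: "equilibrium_stress Kbip (bip_config p q) om"
  unfolding equilibrium_stress_def
proof (intro conjI allI impI)
  fix i j :: "'n+'m" show "om i j = om j i" using om_sym by blast
next
  fix i j :: "'n+'m" assume "\<not> Kbip i j" then show "om i j = 0" by (rule om_edge)
next
  fix j :: "'n+'m"
  let ?P = "bip_config p q"
  show "(\<Sum>i\<in>UNIV. om i j *\<^sub>R (?P i - ?P j)) = 0"
  proof (subst vec_eq_iff, intro allI)
    fix k
    have "(Om *v (\<chi> v. ?P v $ k)) $ j = 0" by (simp add: Om_coord)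
    then have "(\<Sum>v\<in>UNIV. om j v) * ?P j $ k - (\<Sum>v\<in>UNIV. om j v * ?P v $ k) = 0"
      unfolding Om_def by (simp add: stress_mv[of om, OF om_diag])
    then have "(\<Sum>v\<in>UNIV. om j v * (?P v $ k - ?P j $ k)) = 0"
      by (simp add: right_diff_distrib sum_subtractf sum_distrib_right)
    then show "(\<Sum>i\<in>UNIV. om i j *\<^sub>R (?P i - ?P j)) $ k = 0 $ k"
      using om_sym by (simp add: sum_component)
  qed
qed

lemma dist_sq: "(dist x y)^2 = (\<Sum>k\<in>UNIV. (x $ k - y $ k)^2)"
  by (simp add: dist_norm power2_norm_eq_inner inner_vec_def) (simp add: power2_eq_square)

lemma not_conic: "\<not> on_conic_at_infinity_in (direction_space (bip_config p q)) (edge_vectors Kbip (bip_config p q))"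
proof
  assume "on_conic_at_infinity_in (direction_space (bip_config p q)) (edge_vectors Kbip (bip_config p q))"
  then obtain Q :: "real^'k^'k" where tQ: "transpose Q = Q"
    and nz: "\<exists>x\<in>direction_space (bip_config p q). \<exists>y\<in>direction_space (bip_config p q). x \<bullet> (Q *v y) \<noteq> 0"
    and ev: "\<forall>v\<in>edge_vectors Kbip (bip_config p q). v \<bullet> (Q *v v) = 0"
    unfolding on_conic_at_infinity_in_def by blast
  have Qs: "\<forall>k l. Q$k$l = Q$l$k"
  proof (intro allI)
    fix k l
    have "Q$k$l = transpose Q $k$l" using tQ by simp
    then show "Q$k$l = Q$l$k" by (simp add: transpose_def)
  qed
  have e: "\<forall>i j. (q j - p i) \<bullet> (Q *v (q j - p i)) = 0"
  proof (intro allI)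
    fix i j
    have "q j - p i \<in> edge_vectors Kbip (bip_config p q)"
      unfolding edge_vectors_def
      by (rule CollectI, rule exI[of _ "Inr j"], rule exI[of _ "Inl i"]) simp
    then show "(q j - p i) \<bullet> (Q *v (q j - p i)) = 0" using ev by blast
  qed
  from nz conic_gen[OF Qs e] show False by blast
qed

lemma UR: "universally_rigid Kbip (bip_config p q)"
  unfolding universally_rigid_def
proof (rule allI, rule allI, rule impI)
  fix D :: nat and P' :: "('n+'m) \<Rightarrow> nat \<Rightarrow> real"
  let ?P = "bip_config p q"
  assume edges: "\<forall>u v. Kbip u v \<longrightarrow> sqdist_D D (P' u) (P' v) = (dist (?P u) (?P v))^2"
  define X where "X c = (\<chi> v. P' v c)" for c
  have om_sq: "om u v * sqdist_D D (P' u) (P' v) = om u v * (dist (?P u) (?P v))^2" for u v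
    using edges om_edge[of u v] by (cases "Kbip u v") auto
  have sumE: "(\<Sum>c<D. X c \<bullet> (Om *v X c)) = (\<Sum>u\<in>UNIV. \<Sum>v\<in>UNIV. om u v * (dist (?P u) (?P v))^2) / 2"
  proof -
    have "(\<Sum>c<D. X c \<bullet> (Om *v X c)) = (\<Sum>c<D. \<Sum>u\<in>UNIV. \<Sum>v\<in>UNIV. om u v * (P' u c - P' v c)^2) / 2"
      by (simp add: om_quad X_def sum_divide_distrib)
    also have "(\<Sum>c<D. \<Sum>u\<in>UNIV. \<Sum>v\<in>UNIV. om u v * (P' u c - P' v c)^2) = (\<Sum>u\<in>UNIV. \<Sum>c<D. \<Sum>v\<in>UNIV. om u v * (P' u c - P' v c)^2)"
      by (rule sum.swap)
    also have "\<dots> = (\<Sum>u\<in>UNIV. \<Sum>v\<in>UNIV. \<Sum>c<D. om u v * (P' u c - P' v c)^2)"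
      by (rule sum.cong[OF refl], rule sum.swap)
    also have "\<dots> = (\<Sum>u\<in>UNIV. \<Sum>v\<in>UNIV. om u v * sqdist_D D (P' u) (P' v))"
      by (simp add: sqdist_D_def sum_distrib_left)
    also have "\<dots> = (\<Sum>u\<in>UNIV. \<Sum>v\<in>UNIV. om u v * (dist (?P u) (?P v))^2)"
      by (simp add: om_sq)
    finally show ?thesis .
  qed
  have zeroE: "(\<Sum>u\<in>UNIV. \<Sum>v\<in>UNIV. om u v * (dist (?P u) (?P v))^2) = 0"
  proof -
    have "(\<Sum>u\<in>UNIV. \<Sum>v\<in>UNIV. om u v * (dist (?P u) (?P v))^2)
        = (\<Sum>u\<in>UNIV. \<Sum>v\<in>UNIV. \<Sum>k\<in>UNIV. om u v * (?P u $ k - ?P v $ k)^2)"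
      by (simp add: dist_sq sum_distrib_left)
    also have "\<dots> = (\<Sum>u\<in>UNIV. \<Sum>k\<in>UNIV. \<Sum>v\<in>UNIV. om u v * (?P u $ k - ?P v $ k)^2)"
      by (rule sum.cong[OF refl], rule sum.swap)
    also have "\<dots> = (\<Sum>k\<in>UNIV. \<Sum>u\<in>UNIV. \<Sum>v\<in>UNIV. om u v * (?P u $ k - ?P v $ k)^2)"
      by (rule sum.swap)
    also have "\<dots> = (\<Sum>k\<in>UNIV. 2 * ((\<chi> v. ?P v $ k) \<bullet> (Om *v (\<chi> v. ?P v $ k))))"
      by (simp add: om_quad)
    also have "\<dots> = 0" by (simp add: Om_coord)
    finally show ?thesis .
  qed
  have each: "X c \<bullet> (Om *v X c) = 0" if "c < D" for c
  proof -
    have "(\<Sum>c<D. X c \<bullet> (Om *v X c)) = 0" using sumE zeroE by simp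
    moreover have "\<forall>c\<in>{..<D}. 0 \<le> X c \<bullet> (Om *v X c)" using Om_psd by (simp add: psd_def)
    ultimately show ?thesis using that sum_nonneg_eq_0_iff[of "{..<D}" "\<lambda>c. X c \<bullet> (Om *v X c)"] by simp
  qed
  have "\<forall>c. \<exists>z. c < D \<longrightarrow> (\<forall>v. P' v c = hat (?P v) \<bullet> z)"
  proof
    fix c show "\<exists>z. c < D \<longrightarrow> (\<forall>v. P' v c = hat (?P v) \<bullet> z)"
    proof (cases "c < D")
      case True
      have "Om *v X c = 0" by (rule psd_zero[OF Om_sym Om_psd each[OF True]])
      then obtain z where "\<forall>v. X c $ v = hat (?P v) \<bullet> z" using ker_to by blast
      then show ?thesis by (auto simp: X_def)
    qed simp
  qed
  then obtain Z where Z: "\<And>c v. c < D \<Longrightarrow> P' v c = hat (?P v) \<bullet> Z c" by metis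
  define Zt where "Zt c = (\<chi> k. Z c $ Inl k)" for c
  define T :: "real^'k^'k" where "T = (\<chi> k l. \<Sum>c<D. Zt c $ k * Zt c $ l)"
  have Tq: "e \<bullet> (T *v e) = (\<Sum>c<D. (e \<bullet> Zt c)^2)" for e
  proof -
    have "e \<bullet> (T *v e) = (\<Sum>k\<in>UNIV. \<Sum>l\<in>UNIV. \<Sum>c<D. (e$k * Zt c $ k) * (e$l * Zt c $ l))"
      by (simp add: quadQ T_def sum_distrib_left sum_distrib_right mult_ac)
    also have "\<dots> = (\<Sum>k\<in>UNIV. \<Sum>c<D. \<Sum>l\<in>UNIV. (e$k * Zt c $ k) * (e$l * Zt c $ l))"
      by (rule sum.cong[OF refl], rule sum.swap)
    also have "\<dots> = (\<Sum>c<D. \<Sum>k\<in>UNIV. \<Sum>l\<in>UNIV. (e$k * Zt c $ k) * (e$l * Zt c $ l))"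
      by (rule sum.swap)
    also have "\<dots> = (\<Sum>c<D. (e \<bullet> Zt c)^2)"
      by (simp add: power2_eq_square inner_vec_def sum_product)
    finally show ?thesis .
  qed
  have sq: "sqdist_D D (P' u) (P' v) = (?P u - ?P v) \<bullet> (T *v (?P u - ?P v))" for u v
  proof -
    have "P' u c - P' v c = (?P u - ?P v) \<bullet> Zt c" if "c < D" for c
      using Z[OF that, of u] Z[OF that, of v] hat_diff_inner[of "?P u" "?P v" "Z c"]
      by (simp add: Zt_def inner_diff_left)
    then show ?thesis by (simp add: sqdist_D_def Tq)
  qed
  define Q where "Q = T - mat 1"
  have Qs: "\<forall>k l. Q$k$l = Q$l$k" by (simp add: Q_def T_def mat_def mult.commute)
  have Qe: "e \<bullet> (Q *v e) = e \<bullet> (T *v e) - e \<bullet> e" for e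
    by (simp add: Q_def matrix_vector_mult_diff_rdistrib inner_diff_right)
  have dsq: "(dist x y)^2 = (x - y) \<bullet> (x - y)" for x y :: "real^'k"
    by (simp add: dist_norm power2_norm_eq_inner)
  have e: "\<forall>i j. (q j - p i) \<bullet> (Q *v (q j - p i)) = 0"
  proof (intro allI)
    fix i j
    have "sqdist_D D (P' (Inr j)) (P' (Inl i)) = (dist (?P (Inr j)) (?P (Inl i)))^2"
      using edges by simp
    then show "(q j - p i) \<bullet> (Q *v (q j - p i)) = 0" by (simp add: sq Qe dsq)
  qed
  show "\<forall>u v. sqdist_D D (P' u) (P' v) = (dist (?P u) (?P v))^2"
  proof (intro allI)
    fix u v
    have "?P u - ?P v \<in> direction_space ?P" unfolding direction_space_def by (rule span_base) blast
    then have "(?P u - ?P v) \<bullet> (Q *v (?P u - ?P v)) = 0" using conic_gen[OF Qs e] by blast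
    then show "sqdist_D D (P' u) (P' v) = (dist (?P u) (?P v))^2" by (simp add: sq Qe dsq)
  qed
qed

lemma super: "super_stable Kbip (bip_config p q)"
  unfolding super_stable_def
  using equil Om_psd rank_Om not_conic by (auto simp: Om_def)

end

theorem mainTheorem4:
  fixes p :: "'n::finite \<Rightarrow> real^'k"
    and q :: "'m::finite \<Rightarrow> real^'k"
    and lam :: "'n \<Rightarrow> real" and mu :: "'m \<Rightarrow> real"
  assumes "\<forall>i. lam i > 0" and "\<forall>j. mu j > 0"
    and "(\<Sum>i\<in>UNIV. lam i *\<^sub>R outer (hat (p i))) = (\<Sum>j\<in>UNIV. mu j *\<^sub>R outer (hat (q j)))"
  shows "super_stable Kbip (bip_config p q) \<and> universally_rigid Kbip (bip_config p q) \<and>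
         affine hull (range p) = affine hull (range q)"
proof -
  interpret bip p q lam mu using assms by unfold_locales
  show ?thesis using super UR aff_eq by blast
qed



end
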